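(* Let $n\ge 1$ and let $f_1,\dots,f_n\in\mathcal{B}_c$. Let $X=(X_1,\dots,X_n)$ be a random vector in $\mathbb{R}^n$ (the $X_i$ possibly dependent) such that $P(|X_i|\ge u)\le f_i(u)$ for all $u\ge 0$ and all $i$. Let $g:\mathbb{R}^n\to\mathbb{R}$ be continuous, even in each coordinate, and such that for each $i$ and each fixed choice of the other $n-1$ coordinates, $g$ is strictly increasing in the $i$-th coordinate on $[0,\infty)$. Define $h(s)=g\big(f_1^{-1}(s),\dots,f_n^{-1}(s)\big)$ for $s\in(0,1]$, and suppose $\lim_{s\downarrow 0}h(s)=\infty$. Then for all $t\ge h(1)$, $$P(g(X)\ge t)\le n\,h^{-1}(t).$$ Furthermore, if $f_1(0)=\cdots=f_n(0)=:c$, then with $h$ defined by the same formula on $(0,c]$, the inequality $P(g(X)\ge t)\le n\,h^{-1}(t)$ holds for all $t\ge g(\mathbf{0})$.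
   Context: $\mathcal{B}_c$ is the set of functions $f:[0,\infty)\to(0,\infty)$ that are continuous, strictly decreasing, satisfy $f(0)\ge 1$ and $\lim_{u\to\infty}f(u)=0$; $f_i^{-1}$ denotes the inverse function of $f_i$ (defined on $(0,f_i(0)]$). Under the hypotheses, $h$ is continuous and strictly decreasing, so $h^{-1}(t)$ is the unique $s$ with $h(s)=t$. *)

theory Defs
  imports "HOL-Probability.Probability"
begin

definition Bc :: "(real \<Rightarrow> real) \<Rightarrow> bool" where
  "Bc f \<longleftrightarrow> continuous_on {0..} f \<and> strict_antimono_on {0..} f
     \<and> (\<forall>u\<ge>0. f u > 0) \<and> f 0 \<ge> 1 \<and> (f \<longlongrightarrow> 0) at_top"

definition finv :: "(real \<Rightarrow> real) \<Rightarrow> real \<Rightarrow> real" where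
  "finv f s = (THE u. u \<ge> 0 \<and> f u = s)"

end

theory Submission
  imports Defs
begin

lemma Bc_D:
  assumes "Bc f"
  shows "continuous_on {0..} f" "\<And>x y. 0 \<le> x \<Longrightarrow> x < y \<Longrightarrow> f y < f x"
    "\<And>u. u \<ge> 0 \<Longrightarrow> f u > 0" "f 0 \<ge> 1" "(f \<longlongrightarrow> 0) at_top"
  using assms unfolding Bc_def monotone_on_def by auto

lemma Bc_le: assumes "Bc f" "0 \<le> x" "x \<le> y" shows "f y \<le> f x"
  using Bc_D(2)[OF assms(1), of x y] assms by (cases "x = y") auto

lemma Bc_inj: assumes "Bc f" "0 \<le> x" "0 \<le> y" "f x = f y" shows "x = y"
  using Bc_D(2)[OF assms(1), of x y] Bc_D(2)[OF assms(1), of y x] assms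
  by (cases x y rule: linorder_cases) auto

lemma Bc_small: assumes "Bc f" "a > 0" obtains U where "U \<ge> 0" "f U < a"
proof -
  have "eventually (\<lambda>u. f u < a) at_top"
    using Bc_D(5)[OF assms(1)] assms(2) by (simp add: order_tendstoD(2))
  then obtain N where "\<forall>u\<ge>N. f u < a" by (auto simp: eventually_at_top_linorder)
  then show ?thesis using that[of "max N 0"] by auto
qed

lemma Bc_surj: assumes "Bc f" "0 \<le> U" "f U \<le> s" "s \<le> f 0"
  shows "\<exists>u. 0 \<le> u \<and> u \<le> U \<and> f u = s"
proof -
  have "continuous_on {0..U} f"
    using continuous_on_subset[OF Bc_D(1)[OF assms(1)]] by auto
  then show ?thesis using IVT2'[of f U s 0] assms by auto
qed

lemma finv_props: assumes "Bc f" "0 < s" "s \<le> f 0"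
  shows "finv f s \<ge> 0" "f (finv f s) = s"
proof -
  obtain U where U: "U \<ge> 0" "f U < s" using Bc_small[OF assms(1,2)] by auto
  then obtain u where u: "0 \<le> u" "f u = s" using Bc_surj[OF assms(1) U(1) _ assms(3)] by force
  have "finv f s = u" unfolding finv_def
    by (rule the_equality) (use u Bc_inj[OF assms(1)] in auto)
  then show "finv f s \<ge> 0" "f (finv f s) = s" using u by auto
qed

lemma finv_eq: assumes "Bc f" "0 \<le> u" shows "finv f (f u) = u"
  unfolding finv_def by (rule the_equality) (use assms Bc_inj[OF assms(1)] in auto)

lemma finv_strict: assumes "Bc f" "0 < s1" "s1 < s2" "s2 \<le> f 0"
  shows "finv f s2 < finv f s1"
proof (rule ccontr)
  assume "\<not> ?thesis"
  then have "f (finv f s2) \<le> f (finv f s1)"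
    using Bc_le[OF assms(1), of "finv f s1" "finv f s2"] finv_props[OF assms(1), of s1] assms by auto
  then show False using finv_props[OF assms(1)] assms by auto
qed

lemma finv_cont: assumes "Bc f" "0 < a"
  shows "continuous_on {a..f 0} (finv f)"
proof -
  obtain U where U: "U \<ge> 0" "f U < a" using Bc_small[OF assms] by auto
  have c: "continuous_on {0..U} f"
    using continuous_on_subset[OF Bc_D(1)[OF assms(1)]] by auto
  have "continuous_on (f ` {0..U}) (finv f)"
    by (rule continuous_on_inv[OF c]) (auto simp: finv_eq[OF assms(1)])
  moreover have "{a..f 0} \<subseteq> f ` {0..U}"
  proof
    fix s assume "s \<in> {a..f 0}"
    then obtain u where "0 \<le> u \<and> u \<le> U \<and> f u = s" using Bc_surj[OF assms(1) U(1), of s] U by auto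
    then show "s \<in> f ` {0..U}" by auto
  qed
  ultimately show ?thesis using continuous_on_subset by blast
qed


lemma g_mono_strict:
  fixes g :: "real ^ 'n \<Rightarrow> real"
  assumes mono: "\<And>x i a b. 0 \<le> a \<Longrightarrow> a < b \<Longrightarrow>
           g (\<chi> j. if j = i then a else x $ j) < g (\<chi> j. if j = i then b else x $ j)"
    and x0: "\<And>i. 0 \<le> x $ i" and xy: "\<And>i. x $ i < y $ i"
  shows "g x < g y"
proof -
  define z where "z S = (\<chi> j. if j \<in> S then y $ j else x $ j)" for S
  have step: "g (z S) < g (z (insert a S))" if "a \<notin> S" for a S
  proof -
    have "g (\<chi> j. if j = a then x $ a else z S $ j) < g (\<chi> j. if j = a then y $ a else z S $ j)"
      by (rule mono) (use x0 xy in auto)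
    moreover have "(\<chi> j. if j = a then x $ a else z S $ j) = z S"
      using that by (auto simp: vec_eq_iff z_def)
    moreover have "(\<chi> j. if j = a then y $ a else z S $ j) = z (insert a S)"
      using that by (auto simp: vec_eq_iff z_def)
    ultimately show ?thesis by simp
  qed
  have le: "g x \<le> g (z S)" if "finite S" for S
    using that
  proof (induction S rule: finite_induct)
    case empty
    then show ?case by (simp add: z_def)
  next
    case (insert a F)
    then show ?case using step[of a F] by linarith
  qed
  obtain a :: 'n where True by blast
  have "g x \<le> g (z (UNIV - {a}))" by (rule le) simp
  also have "\<dots> < g (z (insert a (UNIV - {a})))" by (rule step) simp
  also have "z (insert a (UNIV - {a})) = y" by (simp add: z_def vec_eq_iff)
  finally show ?thesis .
qed

lemma g_abs:
  fixes g :: "real ^ 'n \<Rightarrow> real"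
  assumes even: "\<And>x i. g (\<chi> j. if j = i then - (x $ i) else x $ j) = g x"
  shows "g (\<chi> j. \<bar>x $ j\<bar>) = g x"
proof -
  define z where "z S = (\<chi> j. if j \<in> S then \<bar>x $ j\<bar> else x $ j)" for S
  have step: "g (z (insert a S)) = g (z S)" if "a \<notin> S" for a S
  proof (cases "x $ a < 0")
    case True
    have "(\<chi> j. if j = a then - (z S $ a) else z S $ j) = z (insert a S)"
      using that True by (auto simp: vec_eq_iff z_def)
    then show ?thesis using even[of a "z S"] by simp
  next
    case False
    have "z S = z (insert a S)"
      using that False by (auto simp: vec_eq_iff z_def)
    then show ?thesis by simp
  qed
  have "g (z S) = g x" if "finite S" for S
    using that
  proof (induction S rule: finite_induct)
    case empty
    then show ?case by (simp add: z_def)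
  next
    case (insert a F)
    then show ?case using step[of a F] by simp
  qed
  from this[of UNIV] show ?thesis by (simp add: z_def)
qed


lemma main_bound:
  fixes M :: "'a measure"
    and X :: "'a \<Rightarrow> real ^ 'n"
    and f :: "'n \<Rightarrow> real \<Rightarrow> real"
    and g :: "real ^ 'n \<Rightarrow> real"
  assumes P: "prob_space M"
    and Xm: "X \<in> borel_measurable M"
    and Bc: "\<And>i. Bc (f i)"
    and tail: "\<And>i u. u \<ge> 0 \<Longrightarrow>
           measure M {\<omega> \<in> space M. \<bar>X \<omega> $ i\<bar> \<ge> u} \<le> f i u"
    and gc: "continuous_on UNIV g"
    and even: "\<And>x i. g (\<chi> j. if j = i then - (x $ i) else x $ j) = g x"
    and mono: "\<And>x i a b. 0 \<le> a \<Longrightarrow> a < b \<Longrightarrow>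
           g (\<chi> j. if j = i then a else x $ j) < g (\<chi> j. if j = i then b else x $ j)"
    and s: "0 < s" "\<And>i. s \<le> f i 0"
  shows "measure M {\<omega> \<in> space M. g (X \<omega>) \<ge> g (\<chi> i. finv (f i) s)} \<le> real CARD('n) * s"
proof -
  interpret prob_space M by (rule P)
  define u where "u = (\<chi> i. finv (f i) s)"
  have u0: "u $ i \<ge> 0" and fu: "f i (u $ i) = s" for i
    using finv_props[OF Bc s(1) s(2)] by (auto simp: u_def)
  define A where "A i = {\<omega> \<in> space M. u $ i \<le> \<bar>X \<omega> $ i\<bar>}" for i
  have Xi: "(\<lambda>\<omega>. X \<omega> $ i) \<in> borel_measurable M" for i
    by (rule measurable_compose[OF Xm borel_measurable_continuous_onI])
      (intro continuous_intros)
  have Am: "A i \<in> sets M" for i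
    unfolding A_def using Xi[of i] by measurable
  have sub: "{\<omega> \<in> space M. g (X \<omega>) \<ge> g u} \<subseteq> (\<Union>i\<in>UNIV. A i)"
  proof
    fix \<omega> assume w: "\<omega> \<in> {\<omega> \<in> space M. g (X \<omega>) \<ge> g u}"
    show "\<omega> \<in> (\<Union>i\<in>UNIV. A i)"
    proof (rule ccontr)
      assume "\<omega> \<notin> (\<Union>i\<in>UNIV. A i)"
      then have lt: "\<bar>X \<omega> $ i\<bar> < u $ i" for i using w by (auto simp: A_def not_le)
      have "g (\<chi> j. \<bar>X \<omega> $ j\<bar>) < g u"
        by (rule g_mono_strict[where g=g, OF mono]) (use lt in auto)
      then show False using w g_abs[where g=g and x="X \<omega>", OF even] by simp
    qed
  qed
  have "measure M {\<omega> \<in> space M. g (X \<omega>) \<ge> g u} \<le> measure M (\<Union>i\<in>UNIV. A i)"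
    by (rule finite_measure_mono[OF sub]) (use Am in auto)
  also have "\<dots> \<le> (\<Sum>i\<in>UNIV. measure M (A i))"
    by (rule finite_measure_subadditive_finite) (use Am in auto)
  also have "\<dots> \<le> (\<Sum>i\<in>(UNIV::'n set). s)"
  proof (rule sum_mono)
    fix i :: 'n
    have "measure M (A i) \<le> f i (u $ i)" unfolding A_def by (rule tail[OF u0])
    then show "measure M (A i) \<le> s" using fu by simp
  qed
  also have "\<dots> = real CARD('n) * s" by simp
  finally show ?thesis by (simp add: u_def)
qed


lemma the_bound:
  fixes M :: "'a measure"
    and X :: "'a \<Rightarrow> real ^ 'n"
    and f :: "'n \<Rightarrow> real \<Rightarrow> real"
    and g :: "real ^ 'n \<Rightarrow> real"
    and h :: "real \<Rightarrow> real"
  assumes P: "prob_space M"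
    and Xm: "X \<in> borel_measurable M"
    and Bc: "\<And>i. Bc (f i)"
    and tail: "\<And>i u. u \<ge> 0 \<Longrightarrow>
           measure M {\<omega> \<in> space M. \<bar>X \<omega> $ i\<bar> \<ge> u} \<le> f i u"
    and gc: "continuous_on UNIV g"
    and even: "\<And>x i. g (\<chi> j. if j = i then - (x $ i) else x $ j) = g x"
    and mono: "\<And>x i a b. 0 \<le> a \<Longrightarrow> a < b \<Longrightarrow>
           g (\<chi> j. if j = i then a else x $ j) < g (\<chi> j. if j = i then b else x $ j)"
    and h_def: "\<And>s. h s = g (\<chi> i. finv (f i) s)"
    and lim: "filterlim h at_top (at_right 0)"
    and m: "0 < m" "\<And>i. m \<le> f i 0"
    and t: "h m \<le> t"
  shows "measure M {\<omega> \<in> space M. g (X \<omega>) \<ge> t}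
             \<le> real CARD('n) * (THE s. 0 < s \<and> s \<le> m \<and> h s = t)"
proof -
  have hdec: "h s2 < h s1" if "0 < s1" "s1 < s2" "s2 \<le> m" for s1 s2
    unfolding h_def
  proof (rule g_mono_strict[where g=g, OF mono])
    fix i
    show "0 \<le> (\<chi> i. finv (f i) s2) $ i"
      using finv_props(1)[OF Bc, of s2 i] m(2)[of i] that by simp
    show "(\<chi> i. finv (f i) s2) $ i < (\<chi> i. finv (f i) s1) $ i"
      using finv_strict[OF Bc, of s1 s2 i] m(2)[of i] that by simp
  qed
  have heq: "h = (\<lambda>s. g (\<chi> i. finv (f i) s))" by (rule ext) (simp add: h_def)
  have hcont: "continuous_on {a..m} h" if "0 < a" for a
    unfolding heq
  proof (rule continuous_on_compose2[OF gc])
    show "continuous_on {a..m} (\<lambda>s. \<chi> i. finv (f i) s)"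
    proof (intro continuous_on_vec_lambda)
      fix i
      show "continuous_on {a..m} (finv (f i))"
        by (rule continuous_on_subset[OF finv_cont[OF Bc that]]) (use m(2)[of i] in auto)
    qed
  qed auto
  have "eventually (\<lambda>x. t \<le> h x) (at_right 0)"
    using lim by (simp add: filterlim_at_top)
  then obtain b where b: "b > 0" "\<And>y. 0 < y \<Longrightarrow> y < b \<Longrightarrow> t \<le> h y"
    by (auto simp: eventually_at_right_field)
  define s0 where "s0 = min (b/2) m"
  have s0: "0 < s0" "s0 \<le> m" "t \<le> h s0" using b m(1) by (auto simp: s0_def)
  obtain s where s: "s0 \<le> s" "s \<le> m" "h s = t"
    using IVT2'[of h m t s0] hcont[OF s0(1)] s0 t by auto
  have the: "(THE s. 0 < s \<and> s \<le> m \<and> h s = t) = s"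
  proof (rule the_equality)
    show "0 < s \<and> s \<le> m \<and> h s = t" using s s0 by auto
    fix s' assume s': "0 < s' \<and> s' \<le> m \<and> h s' = t"
    show "s' = s"
    proof (cases s' s rule: linorder_cases)
      case less then show ?thesis using hdec[of s' s] s s' by auto
    next
      case greater then show ?thesis using hdec[of s s'] s s0 s' by auto
    qed
  qed
  have "measure M {\<omega> \<in> space M. g (X \<omega>) \<ge> g (\<chi> i. finv (f i) s)} \<le> real CARD('n) * s"
    by (rule main_bound[OF P Xm Bc tail gc even mono]) (use s s0 m(2) in \<open>auto intro: order_trans\<close>)
  moreover have "g (\<chi> i. finv (f i) s) = t" using s(3) h_def by simp
  ultimately show ?thesis unfolding the by simp
qed


theorem theorem2:
  fixes M :: "'a measure"
    and X :: "'a \<Rightarrow> real ^ 'n"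
    and f :: "'n \<Rightarrow> real \<Rightarrow> real"
    and g :: "real ^ 'n \<Rightarrow> real"
    and h :: "real \<Rightarrow> real"
  assumes "prob_space M"
    and "X \<in> borel_measurable M"
    and "\<And>i. Bc (f i)"
    and "\<And>i u. u \<ge> 0 \<Longrightarrow>
           measure M {\<omega> \<in> space M. \<bar>X \<omega> $ i\<bar> \<ge> u} \<le> f i u"
    and "continuous_on UNIV g"
    and "\<And>x i. g (\<chi> j. if j = i then - (x $ i) else x $ j) = g x"
    and "\<And>x i a b. 0 \<le> a \<Longrightarrow> a < b \<Longrightarrow>
           g (\<chi> j. if j = i then a else x $ j) < g (\<chi> j. if j = i then b else x $ j)"
    and h_def: "\<And>s. h s = g (\<chi> i. finv (f i) s)"
    and "filterlim h at_top (at_right 0)"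
  shows "(\<forall>t \<ge> h 1. measure M {\<omega> \<in> space M. g (X \<omega>) \<ge> t}
             \<le> real CARD('n) * (THE s. 0 < s \<and> s \<le> 1 \<and> h s = t))
       \<and> (\<forall>c. (\<forall>i. f i 0 = c) \<longrightarrow>
            (\<forall>t \<ge> g 0. measure M {\<omega> \<in> space M. g (X \<omega>) \<ge> t}
               \<le> real CARD('n) * (THE s. 0 < s \<and> s \<le> c \<and> h s = t)))"
proof (intro conjI allI impI)
  fix t assume "h 1 \<le> t"
  then show "measure M {\<omega> \<in> space M. g (X \<omega>) \<ge> t}
             \<le> real CARD('n) * (THE s. 0 < s \<and> s \<le> 1 \<and> h s = t)"
    by (intro the_bound[OF assms]) (use Bc_D(4)[OF assms(3)] in auto)
next
  fix c t assume c: "\<forall>i. f i 0 = c" and t: "g 0 \<le> t"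
  obtain i0 :: 'n where True by blast
  have c1: "1 \<le> c" using Bc_D(4)[OF assms(3), of i0] c by simp
  have "(\<chi> i. finv (f i) c) = 0"
  proof -
    have "finv (f i) c = 0" for i
      using c finv_eq[OF assms(3)[of i], of 0] by simp
    then show ?thesis by (simp add: vec_eq_iff)
  qed
  then have "h c = g 0" using h_def by simp
  then show "measure M {\<omega> \<in> space M. g (X \<omega>) \<ge> t}
             \<le> real CARD('n) * (THE s. 0 < s \<and> s \<le> c \<and> h s = t)"
    by (intro the_bound[OF assms]) (use c c1 t in auto)
qed

end
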